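(* Fix $m\ge1$, $\omega\in\mathbb Z\setminus\{0\}$, and set $\kappa=2\pi\omega$. For every $\delta\in(0,1)$ there exist $\varepsilon_R=\varepsilon_R(m,\omega,\delta)>0$ and $C_{\delta,m,\omega}<\infty$ such that every smooth closed immersed planar curve $\gamma$ of length $1$, turning number $\omega$ and $E_m[\gamma]\le\varepsilon_R$ satisfies $$\int_\gamma R^2\,ds\le\delta\,\mathcal P+C_{\delta,m,\omega}E_m[\gamma]^2,$$ where $\mathcal P=\int_\gamma k_{s^{2m+2}}^2ds$ and $$R:=\mathcal K_m-(-1)^{m+1}\big(k_{s^{2m+2}}+\kappa^2k_{s^{2m}}\big)=(-1)^{m+1}(k^2-\kappa^2)k_{s^{2m}}-\sum_{j=1}^{m-1}(-1)^jk\,k_{s^{m-j}}k_{s^{m+j}}-\tfrac12k\,k_{s^m}^2.$$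
   Context: $s$ arclength, $k$ signed curvature, $k_{s^j}$ its $j$-th arclength derivative, $E_m[\gamma]=\frac12\int_\gamma k_{s^m}^2ds$, $\mathcal K_m=(-1)^{m+1}k_{s^{2m+2}}-\tfrac12 k\,k_{s^m}^2+k\sum_{r=1}^m(-1)^{r+1}k_{s^{m-r}}k_{s^{m+r}}$; turning number $\frac1{2\pi}\int k\,ds$. *)

theory Defs
  imports "HOL-Analysis.Analysis"
begin

text \<open>A smooth closed planar curve, parametrised by arclength with period 1
  (hence of length 1). D n is the n-th derivative of the curve D 0.\<close>
definition smooth_closed_unit_curve :: "(nat \<Rightarrow> real \<Rightarrow> complex) \<Rightarrow> bool" where
  "smooth_closed_unit_curve D \<longleftrightarrow>
     (\<forall>n t. (D n has_vector_derivative D (Suc n) t) (at t)) \<and>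
     (\<forall>t. D 0 (t + 1) = D 0 t) \<and>
     (\<forall>t. norm (D 1 t) = 1)"

text \<open>Signed curvature of an arclength-parametrised curve: det(gamma', gamma'').\<close>
definition curv :: "(nat \<Rightarrow> real \<Rightarrow> complex) \<Rightarrow> real \<Rightarrow> real" where
  "curv D s = Im (cnj (D 1 s) * D 2 s)"

definition ds :: "nat \<Rightarrow> (real \<Rightarrow> real) \<Rightarrow> real \<Rightarrow> real" where
  "ds j k = (deriv ^^ j) k"

definition turning_number :: "(real \<Rightarrow> real) \<Rightarrow> real" where
  "turning_number k = (1 / (2 * pi)) * integral {0..1} k"

definition Em :: "nat \<Rightarrow> (real \<Rightarrow> real) \<Rightarrow> real" where
  "Em m k = (1/2) * integral {0..1} (\<lambda>s. (ds m k s)\<^sup>2)"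

definition Km :: "nat \<Rightarrow> (real \<Rightarrow> real) \<Rightarrow> real \<Rightarrow> real" where
  "Km m k s = (-1) ^ (m + 1) * ds (2*m+2) k s - (1/2) * k s * (ds m k s)\<^sup>2
     + k s * (\<Sum>r=1..m. (-1) ^ (r + 1) * ds (m - r) k s * ds (m + r) k s)"

definition Rm :: "nat \<Rightarrow> real \<Rightarrow> (real \<Rightarrow> real) \<Rightarrow> real \<Rightarrow> real" where
  "Rm m \<kappa> k s = Km m k s - (-1) ^ (m + 1) * (ds (2*m+2) k s + \<kappa>\<^sup>2 * ds (2*m) k s)"

end

theory Submission
  imports Defs
begin


fun Cn :: "nat \<Rightarrow> (real \<Rightarrow> real) \<Rightarrow> bool" where
  "Cn 0 f = True"
| "Cn (Suc n) f = ((\<forall>t. (f has_real_derivative deriv f t) (at t)) \<and> Cn n (deriv f))"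

lemma Cn_mono: "Cn (Suc n) f \<Longrightarrow> Cn n f"
  by (induction n arbitrary: f) auto

lemma deriv_add_fun:
  assumes "\<forall>t. (f has_real_derivative deriv f t) (at t)" "\<forall>t. (g has_real_derivative deriv g t) (at t)"
  shows "deriv (\<lambda>t. f t + g t) = (\<lambda>t. deriv f t + deriv g t)"
  using assms by (intro ext DERIV_imp_deriv) (auto intro!: derivative_eq_intros)

lemma deriv_mult_fun:
  assumes "\<forall>t. (f has_real_derivative deriv f t) (at t)" "\<forall>t. (g has_real_derivative deriv g t) (at t)"
  shows "deriv (\<lambda>t. f t * g t) = (\<lambda>t. deriv f t * g t + f t * deriv g t)"
  using assms by (intro ext DERIV_imp_deriv) (auto intro!: derivative_eq_intros)

lemma Cn_add: "Cn n f \<Longrightarrow> Cn n g \<Longrightarrow> Cn n (\<lambda>t. f t + g t)"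
proof (induction n arbitrary: f g)
  case 0 then show ?case by simp
next
  case (Suc n)
  then show ?case using deriv_add_fun[of f g]
    by (auto intro!: derivative_eq_intros)
qed

lemma Cn_neg: "Cn n f \<Longrightarrow> Cn n (\<lambda>t. - f t)"
proof (induction n arbitrary: f)
  case 0 then show ?case by simp
next
  case (Suc n)
  have "deriv (\<lambda>t. - f t) = (\<lambda>t. - deriv f t)"
    using Suc.prems by (intro ext DERIV_imp_deriv) (auto intro!: derivative_eq_intros)
  then show ?case using Suc by (auto intro!: derivative_eq_intros)
qed

lemma Cn_mult: "Cn n f \<Longrightarrow> Cn n g \<Longrightarrow> Cn n (\<lambda>t. f t * g t)"
proof (induction n arbitrary: f g)
  case 0 then show ?case by simp
next
  case (Suc n)
  have d: "deriv (\<lambda>t. f t * g t) = (\<lambda>t. deriv f t * g t + f t * deriv g t)"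
    using Suc.prems deriv_mult_fun[of f g] by auto
  have "Cn n (\<lambda>t. deriv f t * g t)" using Suc Cn_mono by auto
  moreover have "Cn n (\<lambda>t. f t * deriv g t)" using Suc Cn_mono by auto
  ultimately have "Cn n (deriv (\<lambda>t. f t * g t))" unfolding d by (rule Cn_add)
  then show ?case using Suc.prems d by (auto intro!: derivative_eq_intros)
qed

lemma Cn_chain:
  assumes "\<And>n t. (F n has_real_derivative F (Suc n) t) (at t)"
  shows "Cn n (F j)"
proof (induction n arbitrary: j)
  case 0 then show ?case by simp
next
  case (Suc n)
  have "deriv (F j) = F (Suc j)" using assms by (intro ext DERIV_imp_deriv) auto
  then show ?case using Suc assms by auto
qed

lemma smooth_funpow:
  assumes "\<forall>n. Cn n f"
  shows "(\<forall>n. Cn n ((deriv ^^ j) f)) \<and> (\<forall>t. ((deriv ^^ j) f has_real_derivative (deriv ^^ Suc j) f t) (at t))"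
proof (induction j)
  case 0
  have "Cn (Suc 0) f" using assms by blast
  then have "\<forall>t. (f has_real_derivative deriv f t) (at t)" by (simp only: Cn.simps(2)) blast
  then show ?case using assms by simp
next
  case (Suc j)
  then have a: "\<forall>n. Cn n (deriv ((deriv ^^ j) f))"
    by (metis Cn.simps(2))
  have "Cn (Suc 0) (deriv ((deriv ^^ j) f))" using a by blast
  then have "\<forall>t. (deriv ((deriv ^^ j) f) has_real_derivative deriv (deriv ((deriv ^^ j) f)) t) (at t)"
    by (simp only: Cn.simps(2)) blast
  then show ?case using a by simp
qed

lemma curv_smooth:
  assumes "smooth_closed_unit_curve D"
  shows "\<forall>n. Cn n (curv D)"
proof
  fix n
  have dv: "\<And>j t. (D j has_vector_derivative D (Suc j) t) (at t)"
    using assms unfolding smooth_closed_unit_curve_def by auto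
  have re: "Cn n (\<lambda>t. Re (D j t))" for j
    by (rule Cn_chain[where F="\<lambda>j t. Re (D j t)"]) (auto intro: has_field_derivative_Re dv)
  have im: "Cn n (\<lambda>t. Im (D j t))" for j
    by (rule Cn_chain[where F="\<lambda>j t. Im (D j t)"]) (auto intro: has_field_derivative_Im dv)
  have e: "curv D = (\<lambda>t. Re (D 1 t) * Im (D 2 t) + - (Im (D 1 t) * Re (D 2 t)))"
    unfolding curv_def by (auto simp: algebra_simps)
  show "Cn n (curv D)" unfolding e
    by (intro Cn_add Cn_neg Cn_mult re im)
qed

lemma periodic_deriv:
  assumes "\<And>t. (g has_real_derivative g' t) (at t)" "\<And>t. g (t + 1) = g t"
  shows "g' (t + 1) = g' t"
proof -
  have "((\<lambda>t. t + 1) has_real_derivative 1) (at t)" by (auto intro!: derivative_eq_intros)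
  from DERIV_chain2[OF assms(1) this]
  have "((\<lambda>t. g (t + 1)) has_real_derivative g' (t + 1)) (at t)" by simp
  moreover have "(\<lambda>t. g (t + 1)) = g" using assms(2) by auto
  ultimately show ?thesis using assms(1) DERIV_unique by metis
qed

lemma periodic_D:
  assumes "smooth_closed_unit_curve D"
  shows "D j (t + 1) = D j t"
proof -
  have dv: "\<And>j t. (D j has_vector_derivative D (Suc j) t) (at t)"
    and p0: "\<And>t. D 0 (t+1) = D 0 t"
    using assms unfolding smooth_closed_unit_curve_def by auto
  have "\<forall>t. Re (D j (t+1)) = Re (D j t) \<and> Im (D j (t+1)) = Im (D j t)"
  proof (induction j)
    case 0 then show ?case using p0 by auto
  next
    case (Suc j)
    have r: "\<And>t. ((\<lambda>t. Re (D j t)) has_real_derivative Re (D (Suc j) t)) (at t)"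
      using dv has_field_derivative_Re by blast
    have i: "\<And>t. ((\<lambda>t. Im (D j t)) has_real_derivative Im (D (Suc j) t)) (at t)"
      using dv has_field_derivative_Im by blast
    show ?case using Suc r i
      using periodic_deriv[of "\<lambda>t. Re (D j t)" "\<lambda>t. Re (D (Suc j) t)"]
            periodic_deriv[of "\<lambda>t. Im (D j t)" "\<lambda>t. Im (D (Suc j) t)"]
      by (auto intro: has_field_derivative_Re has_field_derivative_Im dv)
  qed
  then show ?thesis by (simp add: complex_eq_iff)
qed

lemma periodic_ds:
  assumes "smooth_closed_unit_curve D"
  shows "ds j (curv D) (t + 1) = ds j (curv D) t"
proof -
  have sm: "\<forall>t. ((deriv ^^ j) (curv D) has_real_derivative (deriv ^^ Suc j) (curv D) t) (at t)" for j
    using smooth_funpow[OF curv_smooth[OF assms]] by blast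
  show ?thesis unfolding ds_def
  proof (induction j arbitrary: t)
    case 0 then show ?case using periodic_D[OF assms] by (simp add: curv_def)
  next
    case (Suc j)
    then show ?case using periodic_deriv[of "(deriv ^^ j) (curv D)" "(deriv ^^ Suc j) (curv D)"] sm
      by blast
  qed
qed



lemma int_const01[simp]: "integral {0..1::real} (\<lambda>_. c) = (c::real)"
  by simp

lemma zero_exists:
  fixes g :: "real \<Rightarrow> real"
  assumes c: "continuous_on {0..1} g" and i: "(g has_integral 0) {0..1}"
  shows "\<exists>t0\<in>{0..1}. g t0 = 0"
proof -
  have ig: "g integrable_on {0..1}" and ig0: "integral {0..1} g = 0" using i by (auto simp: integrable_on_def integral_unique)
  obtain a where a: "a \<in> {0..1}" "\<forall>y\<in>{0..1}. g a \<le> g y"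
    using continuous_attains_inf[OF compact_Icc _ c] by auto
  obtain b where b: "b \<in> {0..1}" "\<forall>y\<in>{0..1}. g y \<le> g b"
    using continuous_attains_sup[OF compact_Icc _ c] by auto
  have "g a \<le> 0"
  proof -
    have "integral {0..1::real} (\<lambda>_. g a) \<le> integral {0..1} g"
      by (rule integral_le) (use a ig in auto)
    then show ?thesis using ig0 by simp
  qed
  moreover have "g b \<ge> 0"
  proof -
    have "integral {0..1} g \<le> integral {0..1::real} (\<lambda>_. g b)"
      by (rule integral_le) (use b ig in auto)
    then show ?thesis using ig0 by simp
  qed
  ultimately show ?thesis
  proof (cases "a \<le> b")
    case True
    have "continuous_on {a..b} g" using c a b by (auto elim: continuous_on_subset)
    then obtain x where "a \<le> x" "x \<le> b" "g x = 0" using IVT'[of g a 0 b] True \<open>g a \<le> 0\<close> \<open>g b \<ge> 0\<close> by auto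
    then show ?thesis using a b by auto
  next
    case False
    have "continuous_on {b..a} g" using c a b by (auto elim: continuous_on_subset)
    then obtain x where "b \<le> x" "x \<le> a" "g x = 0" using IVT2'[of g a 0 b] False \<open>g a \<le> 0\<close> \<open>g b \<ge> 0\<close> by auto
    then show ?thesis using a b by auto
  qed
qed

lemma diff_bound:
  fixes h h' :: "real \<Rightarrow> real"
  assumes d: "\<And>t. (h has_real_derivative h' t) (at t)" and c: "continuous_on UNIV h'"
    and ab: "0 \<le> a" "a \<le> b" "b \<le> 1"
  shows "\<bar>h b - h a\<bar> \<le> integral {0..1} (\<lambda>s. \<bar>h' s\<bar>)"
proof -
  have ft: "(h' has_integral (h b - h a)) {a..b}"
    by (rule fundamental_theorem_of_calculus) (use ab d in \<open>auto intro: has_field_derivative_at_within simp: has_real_derivative_iff_has_vector_derivative[symmetric]\<close>)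
  have ca: "continuous_on S (\<lambda>s. \<bar>h' s\<bar>)" for S using c by (auto intro!: continuous_intros elim: continuous_on_subset)
  have ch: "continuous_on S h'" for S using c by (auto elim: continuous_on_subset)
  have i1: "integral {a..b} (\<lambda>s. \<bar>h' s\<bar>) \<le> integral {0..1} (\<lambda>s. \<bar>h' s\<bar>)"
    by (rule integral_subset_le) (use ab ca in \<open>auto intro: integrable_continuous_interval\<close>)
  have "h b - h a = integral {a..b} h'" using ft by (simp add: integral_unique)
  also have "\<dots> \<le> integral {a..b} (\<lambda>s. \<bar>h' s\<bar>)"
    by (rule integral_le) (use ca ch in \<open>auto intro: integrable_continuous_interval\<close>)
  finally have 1: "h b - h a \<le> integral {0..1} (\<lambda>s. \<bar>h' s\<bar>)" using i1 by linarith
  have "h a - h b = integral {a..b} (\<lambda>s. - h' s)" using ft by (simp add: integral_unique integral_neg)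
  also have "\<dots> \<le> integral {a..b} (\<lambda>s. \<bar>h' s\<bar>)"
    by (rule integral_le) (use ca ch in \<open>auto intro!: integrable_continuous_interval continuous_intros\<close>)
  finally have 2: "h a - h b \<le> integral {0..1} (\<lambda>s. \<bar>h' s\<bar>)" using i1 by linarith
  show ?thesis using 1 2 by linarith
qed

lemma poincare_sup:
  fixes g g' :: "real \<Rightarrow> real"
  assumes d: "\<And>t. (g has_real_derivative g' t) (at t)" and c: "continuous_on UNIV g'"
    and i: "(g has_integral 0) {0..1}"
  shows "(\<forall>t\<in>{0..1}. (g t)\<^sup>2 \<le> 4 * integral {0..1} (\<lambda>s. (g' s)\<^sup>2))
       \<and> integral {0..1} (\<lambda>s. (g s)\<^sup>2) \<le> 4 * integral {0..1} (\<lambda>s. (g' s)\<^sup>2)"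
proof -
  have cg: "continuous_on UNIV g"
    using d by (metis DERIV_isCont continuous_at_imp_continuous_on)
  have cgS: "continuous_on S g" "continuous_on S g'" for S using cg c by (auto elim: continuous_on_subset)
  obtain t0 where t0: "t0 \<in> {0..1}" "g t0 = 0" using zero_exists[OF cgS(1) i] by auto
  define X0 where "X0 = integral {0..1} (\<lambda>s. (g s)\<^sup>2)"
  define X1 where "X1 = integral {0..1} (\<lambda>s. (g' s)\<^sup>2)"
  have hd: "\<And>t. ((\<lambda>s. (g s)\<^sup>2) has_real_derivative 2 * g t * g' t) (at t)"
    using d by (auto intro!: derivative_eq_intros)
  have hc: "continuous_on UNIV (\<lambda>t. 2 * g t * g' t)" using cgS by (auto intro!: continuous_intros)
  have I: "integral {0..1} (\<lambda>s. \<bar>2 * g s * g' s\<bar>) \<le> X0 / 2 + 2 * X1"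
  proof -
    have "integral {0..1} (\<lambda>s. \<bar>2 * g s * g' s\<bar>) \<le> integral {0..1} (\<lambda>s. (g s)\<^sup>2 / 2 + 2 * (g' s)\<^sup>2)"
    proof (rule integral_le)
      show "(\<lambda>s. \<bar>2 * g s * g' s\<bar>) integrable_on {0..1}"
        using cgS by (auto intro!: integrable_continuous_interval continuous_intros)
      show "(\<lambda>s. (g s)\<^sup>2 / 2 + 2 * (g' s)\<^sup>2) integrable_on {0..1}"
        using cgS by (auto intro!: integrable_continuous_interval continuous_intros)
      fix s
      have "0 \<le> (\<bar>g s\<bar> - 2 * \<bar>g' s\<bar>)\<^sup>2 / 2" by simp
      then show "\<bar>2 * g s * g' s\<bar> \<le> (g s)\<^sup>2 / 2 + 2 * (g' s)\<^sup>2"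
        by (simp add: power2_eq_square abs_mult algebra_simps)
    qed
    also have "\<dots> = X0 / 2 + 2 * X1" unfolding X0_def X1_def
      by (subst integral_add) (use cgS in \<open>auto intro!: integrable_continuous_interval continuous_intros\<close>)
    finally show ?thesis .
  qed
  have pt: "(g t)\<^sup>2 \<le> X0 / 2 + 2 * X1" if t: "t \<in> {0..1}" for t
  proof (cases "t0 \<le> t")
    case True
    then have "\<bar>(g t)\<^sup>2 - (g t0)\<^sup>2\<bar> \<le> integral {0..1} (\<lambda>s. \<bar>2 * g s * g' s\<bar>)"
      using diff_bound[OF hd hc, of t0 t] t t0 by auto
    then show ?thesis using I t0 by simp
  next
    case False
    then have "\<bar>(g t0)\<^sup>2 - (g t)\<^sup>2\<bar> \<le> integral {0..1} (\<lambda>s. \<bar>2 * g s * g' s\<bar>)"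
      using diff_bound[OF hd hc, of t t0] t t0 by auto
    then show ?thesis using I t0 by simp
  qed
  have "X0 \<le> integral {0..1::real} (\<lambda>_. X0 / 2 + 2 * X1)" unfolding X0_def
    by (rule integral_le) (use cgS pt in \<open>auto intro!: integrable_continuous_interval continuous_intros simp: X0_def\<close>)
  then have x: "X0 \<le> 4 * X1" by simp
  show ?thesis using pt x unfolding X0_def X1_def by force
qed



definition L2 :: "(nat \<Rightarrow> real \<Rightarrow> real) \<Rightarrow> nat \<Rightarrow> real" where
  "L2 F j = integral {0..1} (\<lambda>s. (F j s)\<^sup>2)"

definition goodF :: "(nat \<Rightarrow> real \<Rightarrow> real) \<Rightarrow> bool" where
  "goodF F \<longleftrightarrow> (\<forall>j t. (F j has_real_derivative F (Suc j) t) (at t)) \<and> (\<forall>j. F j 1 = F j 0)"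

lemma goodF_cont: "goodF F \<Longrightarrow> continuous_on S (F j)"
  unfolding goodF_def
  by (metis DERIV_isCont continuous_at_imp_continuous_on continuous_on_subset subset_UNIV)

lemma L2_nonneg: "goodF F \<Longrightarrow> 0 \<le> L2 F j"
proof -
  assume g: "goodF F"
  have c: "continuous_on {0..1} (F j)" using goodF_cont[OF g] .
  show ?thesis unfolding L2_def
    by (rule integral_nonneg) (auto intro!: integrable_continuous_interval continuous_intros c)
qed

lemma goodF_ibp:
  assumes g: "goodF F"
  shows "L2 F (Suc j) = - integral {0..1} (\<lambda>s. F j s * F (Suc (Suc j)) s)"
proof -
  have c: "continuous_on S (F i)" for S i using goodF_cont[OF g] .
  have d: "\<And>j t. (F j has_real_derivative F (Suc j) t) (at t)" "\<And>j. F j 1 = F j 0"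
    using g unfolding goodF_def by auto
  have dw: "\<And>j t S. (F j has_real_derivative F (Suc j) t) (at t within S)"
    using d(1) by (rule has_field_derivative_at_within)
  have "((\<lambda>s. F (Suc j) s * F (Suc j) s + F j s * F (Suc (Suc j)) s) has_integral
          (F j 1 * F (Suc j) 1 - F j 0 * F (Suc j) 0)) {0..1}"
    by (rule fundamental_theorem_of_calculus)
       (auto intro!: derivative_eq_intros dw simp: has_real_derivative_iff_has_vector_derivative[symmetric])
  then have "((\<lambda>s. F (Suc j) s * F (Suc j) s + F j s * F (Suc (Suc j)) s) has_integral 0) {0..1}"
    using d(2) by simp
  then have "integral {0..1} (\<lambda>s. F (Suc j) s * F (Suc j) s + F j s * F (Suc (Suc j)) s) = 0"
    by (simp add: integral_unique)
  moreover have "integral {0..1} (\<lambda>s. F (Suc j) s * F (Suc j) s + F j s * F (Suc (Suc j)) s)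
     = L2 F (Suc j) + integral {0..1} (\<lambda>s. F j s * F (Suc (Suc j)) s)"
    unfolding L2_def
    by (subst integral_add) (auto intro!: integrable_continuous_interval continuous_intros c simp: power2_eq_square)
  ultimately show ?thesis by linarith
qed

lemma goodF_Q1:
  assumes g: "goodF F" and e: "e > 0"
  shows "L2 F (Suc j) \<le> e * L2 F (Suc (Suc j)) + L2 F j / (4 * e)"
proof -
  have c: "continuous_on S (F i)" for S i using goodF_cont[OF g] .
  have "- integral {0..1} (\<lambda>s. F j s * F (Suc (Suc j)) s) = integral {0..1} (\<lambda>s. - (F j s * F (Suc (Suc j)) s))"
    by (simp add: integral_neg)
  also have "\<dots> \<le> integral {0..1} (\<lambda>s. e * (F (Suc (Suc j)) s)\<^sup>2 + (F j s)\<^sup>2 / (4 * e))"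
  proof (rule integral_le)
    show "(\<lambda>s. - (F j s * F (Suc (Suc j)) s)) integrable_on {0..1}"
      by (auto intro!: integrable_continuous_interval continuous_intros c)
    show "(\<lambda>s. e * (F (Suc (Suc j)) s)\<^sup>2 + (F j s)\<^sup>2 / (4 * e)) integrable_on {0..1}"
      using e by (auto intro!: integrable_continuous_interval continuous_intros c)
    fix s
    have "0 \<le> (2 * e * F (Suc (Suc j)) s + F j s)\<^sup>2 / (4 * e)" using e by simp
    also have "\<dots> = e * (F (Suc (Suc j)) s)\<^sup>2 + F j s * F (Suc (Suc j)) s + (F j s)\<^sup>2 / (4 * e)"
      using e by (simp add: power2_eq_square field_simps)
    finally show "- (F j s * F (Suc (Suc j)) s) \<le> e * (F (Suc (Suc j)) s)\<^sup>2 + (F j s)\<^sup>2 / (4 * e)"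
      by linarith
  qed
  also have "\<dots> = e * L2 F (Suc (Suc j)) + L2 F j / (4 * e)"
    unfolding L2_def using e
    by (subst integral_add) (auto intro!: integrable_continuous_interval continuous_intros c)
  finally show ?thesis using goodF_ibp[OF g] by simp
qed

lemma goodF_mean0:
  assumes g: "goodF F"
  shows "(F (Suc j) has_integral 0) {0..1}"
proof -
  have d: "\<And>j t. (F j has_real_derivative F (Suc j) t) (at t)" "\<And>j. F j 1 = F j 0"
    using g unfolding goodF_def by auto
  have "(F (Suc j) has_integral (F j 1 - F j 0)) {0..1}"
    by (rule fundamental_theorem_of_calculus)
       (auto intro!: has_field_derivative_at_within d(1) simp: has_real_derivative_iff_has_vector_derivative[symmetric])
  then show ?thesis using d(2) by simp
qed

lemma goodF_ps:
  assumes g: "goodF F"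
  shows "(\<forall>t\<in>{0..1}. (F (Suc j) t)\<^sup>2 \<le> 4 * L2 F (Suc (Suc j))) \<and> L2 F (Suc j) \<le> 4 * L2 F (Suc (Suc j))"
  unfolding L2_def
  by (rule poincare_sup) (use g goodF_cont[OF g] goodF_mean0[OF g] in \<open>auto simp: goodF_def\<close>)

lemma goodF_chain:
  assumes g: "goodF F"
  shows "L2 F (Suc i) \<le> 4 ^ n * L2 F (Suc i + n)"
proof (induction n)
  case 0 then show ?case by simp
next
  case (Suc n)
  have "L2 F (Suc i + n) \<le> 4 * L2 F (Suc i + Suc n)"
    using goodF_ps[OF g, of "i + n"] by simp
  then have "4 ^ n * L2 F (Suc i + n) \<le> 4 ^ n * (4 * L2 F (Suc i + Suc n))"
    by (intro mult_left_mono) auto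
  then have "L2 F (Suc i) \<le> 4 ^ n * (4 * L2 F (Suc i + Suc n))" using Suc.IH by linarith
  then show ?case by (simp add: algebra_simps)
qed

lemma goodF_chain2:
  assumes g: "goodF F" and "1 \<le> i" "i \<le> j" "j - i \<le> N"
  shows "L2 F i \<le> 4 ^ N * L2 F j"
proof -
  obtain i' where i': "i = Suc i'" using assms by (cases i) auto
  have "L2 F i \<le> 4 ^ (j - i) * L2 F j" using goodF_chain[OF g, of i' "j - i"] i' assms by simp
  also have "\<dots> \<le> 4 ^ N * L2 F j"
    by (intro mult_right_mono power_increasing) (use assms L2_nonneg[OF g] in auto)
  finally show ?thesis .
qed

lemma interp_seq:
  fixes \<epsilon> :: real
  assumes "\<epsilon> > 0"
  shows "\<exists>C. \<forall>x::nat\<Rightarrow>real. (\<forall>j. 0 \<le> x j) \<and> (\<forall>j e. e > 0 \<longrightarrow> x (Suc j) \<le> e * x (Suc (Suc j)) + x j / (4 * e))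
            \<longrightarrow> (\<forall>j. x (j + d) \<le> \<epsilon> * x (j + d + 1) + C * x j)"
  using assms
proof (induction d arbitrary: \<epsilon>)
  case 0
  show ?case
    by (rule exI[of _ 1]) (use 0 in \<open>auto intro!: mult_nonneg_nonneg\<close>)
next
  case (Suc d)
  obtain C2 where C2: "\<forall>x::nat\<Rightarrow>real. (\<forall>j. 0 \<le> x j) \<and> (\<forall>j e. e > 0 \<longrightarrow> x (Suc j) \<le> e * x (Suc (Suc j)) + x j / (4 * e))
            \<longrightarrow> (\<forall>j. x (j + d) \<le> \<epsilon> * x (j + d + 1) + C2 * x j)"
    using Suc.IH[OF Suc.prems] by blast
  show ?case
  proof (rule exI[of _ "C2 / \<epsilon>"], intro allI impI)
    fix x :: "nat \<Rightarrow> real" and j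
    assume h: "(\<forall>j. 0 \<le> x j) \<and> (\<forall>j e. e > 0 \<longrightarrow> x (Suc j) \<le> e * x (Suc (Suc j)) + x j / (4 * e))"
    have h1: "x (j + d + 1) \<le> (\<epsilon>/2) * x (j + d + 2) + x (j + d) / (4 * (\<epsilon>/2))"
      using h[THEN conjunct2, rule_format, of "\<epsilon>/2" "j+d"] Suc.prems by (simp add: numeral_2_eq_2)
    have h2: "x (j + d) \<le> \<epsilon> * x (j + d + 1) + C2 * x j" using C2 h by blast
    have "x (j + d) / (4 * (\<epsilon>/2)) \<le> (\<epsilon> * x (j + d + 1) + C2 * x j) / (4 * (\<epsilon>/2))"
      by (rule divide_right_mono) (use h2 Suc.prems in auto)
    also have "\<dots> = x (j + d + 1) / 2 + (C2 / \<epsilon>) * x j / 2" using Suc.prems by (simp add: field_simps)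
    finally show "x (j + Suc d) \<le> \<epsilon> * x (j + Suc d + 1) + C2 / \<epsilon> * x j"
      using h1 by (simp add: algebra_simps)
  qed
qed

lemma interp_main:
  fixes \<epsilon> :: real
  assumes "\<epsilon> > 0"
  shows "\<exists>C. \<forall>F. goodF F \<longrightarrow> L2 F (2*m) \<le> \<epsilon> * L2 F (2*m+2) + C * L2 F m"
proof -
  obtain C where C: "\<forall>x::nat\<Rightarrow>real. (\<forall>j. 0 \<le> x j) \<and> (\<forall>j e. e > 0 \<longrightarrow> x (Suc j) \<le> e * x (Suc (Suc j)) + x j / (4 * e))
            \<longrightarrow> (\<forall>j. x (j + m) \<le> (\<epsilon>/4) * x (j + m + 1) + C * x j)"
    using interp_seq[of "\<epsilon>/4" m] assms by auto
  show ?thesis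
  proof (rule exI[of _ C], intro allI impI)
    fix F assume g: "goodF F"
    have "L2 F (m + m) \<le> (\<epsilon>/4) * L2 F (m + m + 1) + C * L2 F m"
      using C[rule_format, of "L2 F" m] L2_nonneg[OF g] goodF_Q1[OF g] by blast
    moreover have "L2 F (m + m + 1) \<le> 4 * L2 F (2*m+2)"
      using goodF_ps[OF g, of "m+m"] by (simp add: numeral_2_eq_2)
    then have "\<epsilon> * L2 F (m + m + 1) \<le> \<epsilon> * (4 * L2 F (2*m+2))"
      using assms by (intro mult_left_mono) auto
    ultimately show "L2 F (2*m) \<le> \<epsilon> * L2 F (2*m+2) + C * L2 F m"
      by (simp add: mult_2)
  qed
qed



lemma R_decomp:
  assumes "m = Suc n"
  shows "Rm m \<kappa> k s = (-1) ^ (m + 1) * ((k s)\<^sup>2 - \<kappa>\<^sup>2) * ds (2*m) k s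
     + k s * (\<Sum>r=1..n. (-1) ^ (r + 1) * ds (m - r) k s * ds (m + r) k s)
     - (1/2) * k s * (ds m k s)\<^sup>2"
proof -
  have s: "(\<Sum>r=1..m. (-1) ^ (r + 1) * ds (m - r) k s * ds (m + r) k s)
      = (\<Sum>r=1..n. (-1) ^ (r + 1) * ds (m - r) k s * ds (m + r) k s) + (-1) ^ (m + 1) * k s * ds (2*m) k s"
    using assms by (simp add: ds_def mult_2)
  show ?thesis unfolding Rm_def Km_def s by (simp add: algebra_simps power2_eq_square)
qed



lemma curve_goodF:
  assumes "smooth_closed_unit_curve D"
  shows "goodF (\<lambda>j. ds j (curv D))"
  unfolding goodF_def
proof (intro conjI allI)
  fix j t
  show "(ds j (curv D) has_real_derivative ds (Suc j) (curv D) t) (at t)"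
    using smooth_funpow[OF curv_smooth[OF assms], of j] unfolding ds_def by blast
next
  fix j
  show "ds j (curv D) 1 = ds j (curv D) 0" using periodic_ds[OF assms, of j 0] by simp
qed

theorem mainTheorem8:
  fixes m :: nat and \<omega> :: int and \<delta> :: real
  assumes "m \<ge> 1" and "\<omega> \<noteq> 0" and "0 < \<delta>" and "\<delta> < 1"
  shows "\<exists>\<epsilon>R > 0. \<exists>C :: real. \<forall>D.
           smooth_closed_unit_curve D \<and>
           turning_number (curv D) = real_of_int \<omega> \<and>
           Em m (curv D) \<le> \<epsilon>R \<longrightarrow>
           integral {0..1} (\<lambda>s. (Rm m (2 * pi * real_of_int \<omega>) (curv D) s)\<^sup>2)
             \<le> \<delta> * integral {0..1} (\<lambda>s. (ds (2*m+2) (curv D) s)\<^sup>2)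
               + C * (Em m (curv D))\<^sup>2"
proof -
  obtain n where mn: "m = Suc n" using assms(1) by (cases m) auto
  define \<kappa> where "\<kappa> = 2 * pi * real_of_int \<omega>"
  define K where "K = \<bar>\<kappa>\<bar> + 1"
  define K1 where "K1 = (1 + 2 * \<bar>\<kappa>\<bar>)\<^sup>2"
  define M where "M = 3 * (4 ^ (m+1) * K1 + K\<^sup>2 * (real n)\<^sup>2 * 4 ^ (m+1) * 4 ^ m + K\<^sup>2 * 4 ^ m)"
  have K1pos: "K1 \<ge> 1" unfolding K1_def by (rule one_le_power) simp
  have Mpos: "M > 0" unfolding M_def using K1pos
    by (intro mult_pos_pos add_pos_nonneg) (auto intro!: mult_nonneg_nonneg mult_pos_pos)
  obtain C\<epsilon> where C\<epsilon>: "\<forall>F. goodF F \<longrightarrow> L2 F (2*m) \<le> (\<delta>/M) * L2 F (2*m+2) + C\<epsilon> * L2 F m"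
    using interp_main[of "\<delta>/M" m] Mpos assms(3) by auto
  define \<epsilon>R :: real where "\<epsilon>R = 1 / (2 * 4 ^ (m+1))"
  show ?thesis
  proof (rule exI[of _ \<epsilon>R], intro conjI exI[of _ "4 * M * C\<epsilon>"] allI impI)
    show "\<epsilon>R > 0" unfolding \<epsilon>R_def by simp
    fix D
    assume hD: "smooth_closed_unit_curve D \<and> turning_number (curv D) = real_of_int \<omega> \<and> Em m (curv D) \<le> \<epsilon>R"
    define k where "k = curv D"
    define F where "F = (\<lambda>j. ds j k)"
    have g: "goodF F" unfolding F_def k_def using curve_goodF hD by blast
    have cF: "continuous_on S (ds j k)" for S j using goodF_cont[OF g] unfolding F_def .
    have Fd: "(ds j k has_real_derivative ds (Suc j) k t) (at t)" for j t
      using g unfolding goodF_def F_def by blast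
    have L2nn: "0 \<le> L2 F j" for j using L2_nonneg[OF g] .
    define A where "A = L2 F m"
    define X where "X = L2 F (2*m)"
    define P where "P = L2 F (2*m+2)"
    have EmA: "Em m k = A / 2" unfolding Em_def A_def L2_def F_def by simp
    have A4: "4 ^ (m+1) * A \<le> 1" using hD EmA unfolding k_def \<epsilon>R_def by (simp add: field_simps)
    have A1: "A \<le> 1"
    proof -
      have o: "(1::real) \<le> 4 ^ (m+1)" by (rule one_le_power) simp
      have "1 * A \<le> 4 ^ (m+1) * A" by (rule mult_right_mono) (use o in \<open>auto simp: A_def L2nn\<close>)
      then show ?thesis using A4 by simp
    qed
    have A0: "0 \<le> A" unfolding A_def by (rule L2nn)
    define B where "B = 4 ^ (m+1) * A"
    have B1: "B \<le> 1" and B0: "0 \<le> B" using A4 A0 unfolding B_def by auto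
    have k0: "ds 0 k = k" by (simp add: ds_def)
    have intk: "integral {0..1} k = \<kappa>"
      using hD unfolding turning_number_def k_def \<kappa>_def by (simp add: field_simps)
    have kint: "k integrable_on {0..1}" using cF[of _ 0] k0 by (metis integrable_continuous_interval)
    have u0: "((\<lambda>s. k s - \<kappa>) has_integral 0) {0..1}"
      using has_integral_diff[OF integrable_integral[OF kint] has_integral_const_real[of \<kappa> 0 1]] intk by simp
    have ud: "((\<lambda>s. k s - \<kappa>) has_real_derivative ds 1 k t) (at t)" for t
      using Fd[of 0 t] k0 by (auto intro!: derivative_eq_intros)
    have usup: "\<forall>t\<in>{0..1}. (k t - \<kappa>)\<^sup>2 \<le> 4 * L2 F 1"
      using poincare_sup[of "\<lambda>s. k s - \<kappa>" "ds 1 k", OF ud cF u0] unfolding L2_def F_def by blast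
    have L1: "L2 F 1 \<le> 4 ^ m * A" unfolding A_def using goodF_chain2[OF g, of 1 m m] mn by simp
    have ub: "(k t - \<kappa>)\<^sup>2 \<le> B" if "t \<in> {0..1}" for t
    proof -
      have "(k t - \<kappa>)\<^sup>2 \<le> 4 * L2 F 1" using usup that by auto
      also have "\<dots> \<le> 4 * (4 ^ m * A)" using L1 by simp
      also have "\<dots> = B" unfolding B_def by simp
      finally show ?thesis .
    qed
    have supF: "(ds (Suc j) k t)\<^sup>2 \<le> 4 * L2 F (Suc (Suc j))" if "t \<in> {0..1}" for t j
      using goodF_ps[OF g, of j] that unfolding F_def by auto
    define G where "G = (\<lambda>s. 3 * (B * K1 * (ds (2*m) k s)\<^sup>2
         + K\<^sup>2 * real n * B * (\<Sum>r=1..n. (ds (m + r) k s)\<^sup>2)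
         + K\<^sup>2 * L2 F (m+1) * (ds m k s)\<^sup>2))"
    have pw: "(Rm m \<kappa> k s)\<^sup>2 \<le> G s" if s: "s \<in> {0..1}" for s
    proof -
      define u where "u = k s - \<kappa>"
      have u2: "u\<^sup>2 \<le> 1" and u2B: "u\<^sup>2 \<le> B" using ub[OF s] B1 unfolding u_def by auto
      have ua: "\<bar>u\<bar> \<le> 1" using u2 abs_le_square_iff[of u 1] by simp
      have kK: "(k s)\<^sup>2 \<le> K\<^sup>2"
      proof -
        have "\<bar>k s\<bar> \<le> K" using ua unfolding u_def K_def by linarith
        then show ?thesis using power2_le_iff_abs_le[of K "k s"] by (simp add: K_def)
      qed
      define T1 where "T1 = (-1) ^ (m + 1) * ((k s)\<^sup>2 - \<kappa>\<^sup>2) * ds (2*m) k s"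
      define Sm where "Sm = (\<Sum>r=1..n. (-1) ^ (r + 1) * ds (m - r) k s * ds (m + r) k s)"
      define T3 where "T3 = (1/2) * k s * (ds m k s)\<^sup>2"
      have R: "Rm m \<kappa> k s = T1 + k s * Sm - T3"
        unfolding T1_def Sm_def T3_def by (rule R_decomp[OF mn])
      have sq3: "(a + b - c)\<^sup>2 \<le> 3 * (a\<^sup>2 + b\<^sup>2 + c\<^sup>2)" for a b c :: real
      proof -
        have "0 \<le> (a - b)\<^sup>2 + (a + c)\<^sup>2 + (b + c)\<^sup>2" by simp
        then show ?thesis by (simp add: power2_eq_square algebra_simps)
      qed
      have b1: "T1\<^sup>2 \<le> B * K1 * (ds (2*m) k s)\<^sup>2"
      proof -
        have "T1\<^sup>2 = u\<^sup>2 * (u + 2 * \<kappa>)\<^sup>2 * (ds (2*m) k s)\<^sup>2"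
          unfolding T1_def u_def by (simp add: power2_eq_square power_mult_distrib algebra_simps)
        also have "\<dots> \<le> B * K1 * (ds (2*m) k s)\<^sup>2"
        proof (intro mult_right_mono mult_mono)
          have "\<bar>u + 2 * \<kappa>\<bar> \<le> 1 + 2 * \<bar>\<kappa>\<bar>" using ua by linarith
          then show "(u + 2 * \<kappa>)\<^sup>2 \<le> K1" unfolding K1_def
            using power2_le_iff_abs_le[of "1 + 2 * \<bar>\<kappa>\<bar>" "u + 2 * \<kappa>"] by simp
        qed (use u2B B0 in auto)
        finally show ?thesis .
      qed
      have b2: "(k s * Sm)\<^sup>2 \<le> K\<^sup>2 * real n * B * (\<Sum>r=1..n. (ds (m + r) k s)\<^sup>2)"
      proof -
        have "Sm\<^sup>2 \<le> (\<Sum>r=1..n. ((-1) ^ (r + 1) * ds (m - r) k s * ds (m + r) k s)\<^sup>2) * card {1..n}"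
          unfolding Sm_def by (rule sum_squared_le_sum_of_squares)
        also have "\<dots> \<le> (\<Sum>r=1..n. B * (ds (m + r) k s)\<^sup>2) * real n"
        proof (intro mult_mono sum_mono)
          fix r assume r: "r \<in> {1..n}"
          obtain q where q: "m - r = Suc q" using r mn by (metis Suc_diff_le atLeastAtMost_iff diff_Suc_Suc le_SucI)
          have "(ds (m - r) k s)\<^sup>2 \<le> 4 * L2 F (Suc (Suc q))" using supF[OF s, of q] q by simp
          also have "\<dots> \<le> 4 * (4 ^ m * A)"
          proof -
            have "L2 F (Suc (Suc q)) \<le> 4 ^ m * L2 F m"
              by (rule goodF_chain2[OF g]) (use q r mn in auto)
            then show ?thesis unfolding A_def by simp
          qed
          finally have "(ds (m - r) k s)\<^sup>2 \<le> B" unfolding B_def by simp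
          then show "((-1) ^ (r + 1) * ds (m - r) k s * ds (m + r) k s)\<^sup>2 \<le> B * (ds (m + r) k s)\<^sup>2"
            by (simp add: power_mult_distrib mult_right_mono flip: power_mult power_even_eq)
        qed (use B0 in \<open>auto intro!: sum_nonneg\<close>)
        finally have "Sm\<^sup>2 \<le> real n * B * (\<Sum>r=1..n. (ds (m + r) k s)\<^sup>2)"
          by (simp add: sum_distrib_left algebra_simps)
        then have "(k s)\<^sup>2 * Sm\<^sup>2 \<le> K\<^sup>2 * (real n * B * (\<Sum>r=1..n. (ds (m + r) k s)\<^sup>2))"
          by (intro mult_mono kK) auto
        then show ?thesis by (simp add: power_mult_distrib algebra_simps)
      qed
      have b3: "T3\<^sup>2 \<le> K\<^sup>2 * L2 F (m+1) * (ds m k s)\<^sup>2"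
      proof -
        have sm: "(ds m k s)\<^sup>2 \<le> 4 * L2 F (m+1)" using supF[OF s, of n] mn by simp
        have "T3\<^sup>2 = (1/4) * (k s)\<^sup>2 * (ds m k s)\<^sup>2 * (ds m k s)\<^sup>2"
          unfolding T3_def by (simp add: power2_eq_square)
        also have "\<dots> \<le> (1/4) * K\<^sup>2 * (4 * L2 F (m+1)) * (ds m k s)\<^sup>2"
          by (intro mult_right_mono mult_left_mono mult_mono kK sm) auto
        finally show ?thesis by simp
      qed
      have "(Rm m \<kappa> k s)\<^sup>2 \<le> 3 * (T1\<^sup>2 + (k s * Sm)\<^sup>2 + T3\<^sup>2)" unfolding R by (rule sq3)
      also have "\<dots> \<le> G s" unfolding G_def using b1 b2 b3 by simp
      finally show ?thesis .
    qed
    have cR: "continuous_on {0..1} (\<lambda>s. (Rm m \<kappa> k s)\<^sup>2)"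
    proof -
      have ck: "continuous_on S k" for S using cF[of S 0] k0 by simp
      show ?thesis unfolding Rm_def Km_def by (intro continuous_intros cF ck)
    qed
    have intsum: "integral {0..1} (\<lambda>s. \<Sum>r=1..n. (ds (m + r) k s)\<^sup>2) = (\<Sum>r=1..n. L2 F (m + r))"
      unfolding L2_def F_def
      by (rule integral_sum) (auto intro!: integrable_continuous_interval continuous_intros cF)
    have intG: "integral {0..1} G = 3 * (B * K1 * X + K\<^sup>2 * real n * B * (\<Sum>r=1..n. L2 F (m + r)) + K\<^sup>2 * L2 F (m+1) * A)"
    proof -
      have i3: "integral {0..1} (\<lambda>s. 3 * (a s + b s + c s)) = 3 * (integral {0..1} a + integral {0..1} b + integral {0..1} c)"
        if "continuous_on {0..1} a" "continuous_on {0..1} b" "continuous_on {0..1} c" for a b c :: "real \<Rightarrow> real"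
      proof -
        have ia: "a integrable_on {0..1}" "b integrable_on {0..1}" "c integrable_on {0..1}"
          using that by (auto intro: integrable_continuous_interval)
        have "integral {0..1} (\<lambda>s. 3 * (a s + b s + c s)) = 3 * integral {0..1} (\<lambda>s. a s + b s + c s)"
          by (rule integral_mult_right)
        also have "integral {0..1} (\<lambda>s. a s + b s + c s) = integral {0..1} (\<lambda>s. a s + b s) + integral {0..1} c"
          by (rule integral_add) (use ia in \<open>auto intro: integrable_add\<close>)
        also have "integral {0..1} (\<lambda>s. a s + b s) = integral {0..1} a + integral {0..1} b"
          by (rule integral_add) (use ia in auto)
        finally show ?thesis .
      qed
      have "integral {0..1} G = 3 * (integral {0..1} (\<lambda>s. B * K1 * (ds (2*m) k s)\<^sup>2)
         + integral {0..1} (\<lambda>s. K\<^sup>2 * real n * B * (\<Sum>r=1..n. (ds (m + r) k s)\<^sup>2))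
         + integral {0..1} (\<lambda>s. K\<^sup>2 * L2 F (m+1) * (ds m k s)\<^sup>2))"
        unfolding G_def by (rule i3) (auto intro!: continuous_intros cF)
      also have "\<dots> = 3 * (B * K1 * X + K\<^sup>2 * real n * B * (\<Sum>r=1..n. L2 F (m + r)) + K\<^sup>2 * L2 F (m+1) * A)"
        unfolding integral_mult_right intsum by (simp add: X_def A_def L2_def F_def)
      finally show ?thesis .
    qed
    have intle: "integral {0..1} (\<lambda>s. (Rm m \<kappa> k s)\<^sup>2) \<le> integral {0..1} G"
      by (rule integral_le) (use cR pw in \<open>auto intro!: integrable_continuous_interval continuous_intros cF simp: G_def\<close>)
    have sumb: "(\<Sum>r=1..n. L2 F (m + r)) \<le> real n * (4 ^ m * X)"
    proof -
      have "(\<Sum>r=1..n. L2 F (m + r)) \<le> (\<Sum>r=1..n. 4 ^ m * X)"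
      proof (rule sum_mono)
        fix r assume r: "r \<in> {1..n}"
        show "L2 F (m + r) \<le> 4 ^ m * X" unfolding X_def
          by (rule goodF_chain2[OF g]) (use r mn in auto)
      qed
      then show ?thesis by simp
    qed
    have Lm1: "L2 F (m+1) \<le> 4 ^ m * X" unfolding X_def by (rule goodF_chain2[OF g]) (use mn in auto)
    show "integral {0..1} (\<lambda>s. (Rm m (2 * pi * real_of_int \<omega>) (curv D) s)\<^sup>2)
             \<le> \<delta> * integral {0..1} (\<lambda>s. (ds (2*m+2) (curv D) s)\<^sup>2)
               + 4 * M * C\<epsilon> * (Em m (curv D))\<^sup>2"
    proof -
      have X0: "0 \<le> X" and P0: "0 \<le> P" unfolding X_def P_def by (auto intro: L2nn)
      have t2: "K\<^sup>2 * real n * B * (\<Sum>r=1..n. L2 F (m + r)) \<le> K\<^sup>2 * real n * B * (real n * (4 ^ m * X))"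
        by (rule mult_left_mono[OF sumb]) (use B0 in auto)
      have t3: "K\<^sup>2 * L2 F (m+1) * A \<le> K\<^sup>2 * (4 ^ m * X) * A"
        by (intro mult_right_mono mult_left_mono Lm1) (use A0 in auto)
      have eq: "3 * (B * K1 * X + K\<^sup>2 * real n * B * (real n * (4 ^ m * X)) + K\<^sup>2 * (4 ^ m * X) * A) = M * A * X"
        unfolding M_def B_def by (simp add: algebra_simps power2_eq_square)
      have s1: "integral {0..1} (\<lambda>s. (Rm m \<kappa> k s)\<^sup>2) \<le> M * A * X"
      proof -
        have "integral {0..1} G \<le> 3 * (B * K1 * X + K\<^sup>2 * real n * B * (real n * (4 ^ m * X)) + K\<^sup>2 * (4 ^ m * X) * A)"
          unfolding intG using t2 t3 by simp
        then show ?thesis using intle eq by linarith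
      qed
      have Xb: "X \<le> (\<delta>/M) * P + C\<epsilon> * A" using C\<epsilon> g unfolding X_def P_def A_def by blast
      have "M * A * X \<le> M * A * ((\<delta>/M) * P + C\<epsilon> * A)"
        by (rule mult_left_mono[OF Xb]) (use Mpos A0 in auto)
      also have "\<dots> = A * (\<delta> * P) + M * C\<epsilon> * A\<^sup>2" using Mpos by (simp add: field_simps power2_eq_square)
      also have "A * (\<delta> * P) \<le> 1 * (\<delta> * P)"
        by (rule mult_right_mono[OF A1]) (use P0 assms(3) in auto)
      finally have s2: "M * A * X \<le> \<delta> * P + M * C\<epsilon> * A\<^sup>2" by simp
      have e1: "M * C\<epsilon> * A\<^sup>2 = 4 * M * C\<epsilon> * (Em m k)\<^sup>2" unfolding EmA by (simp add: power2_eq_square)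
      have e2: "integral {0..1} (\<lambda>s. (ds (2*m+2) k s)\<^sup>2) = P" unfolding P_def L2_def F_def by simp
      have "integral {0..1} (\<lambda>s. (Rm m \<kappa> k s)\<^sup>2) \<le> \<delta> * integral {0..1} (\<lambda>s. (ds (2*m+2) k s)\<^sup>2) + 4 * M * C\<epsilon> * (Em m k)\<^sup>2"
        unfolding e2 using s1 s2 e1 by linarith
      then show ?thesis unfolding \<kappa>_def k_def .
    qed
  qed
qed

end
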